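(* Every element of $\widehat{\Pi}_{3/3,3}$ can be written as \[ \psi_a(z)=\frac{\frac16\left(-6a^3+18a^2-9a+1\right)z^3+\frac12\left(6a^2-6a+1\right)z^2+(1-3a)z+1}{(1-az)^3},\qquad a\in\mathbb{R}. \] Then $\widehat{R}_{3/3,3}=2+\sqrt8$. This value is attained for $a=\frac{2-\sqrt2}{4}$, and $R(\psi_a)<2+\sqrt8$ for every other $a\in\mathbb{R}$.
   Context: A real rational function $\psi$ is always considered in lowest terms, as a smooth function on $\mathbb{R}$ minus its finitely many poles. It is absolutely monotonic at $x\in\mathbb{R}$ if $x$ is not a pole and $\psi^{(k)}(x)\ge 0$ for all integers $k\ge 0$. The radius of absolute monotonicity is $R(\psi)=\sup\big(\{r\in[0,\infty): \psi \text{ is absolutely monotonic at each point of } [-r,0]\}\cup\{0\}\big)\in[0,+\infty]$. $\widehat{\Pi}_{s/s,p}$ denotes the set of real rational functions $\psi(z)=P(z)/(1-az)^s$ with $P$ a real polynomial of degree at most $s$ and $a\in\mathbb{R}$, such that $\psi(z)-e^z=O(z^{p+1})$ as $z\to0$. Finally, $\widehat{R}_{s/s,p}=\sup\{R(\psi):\psi\in\widehat{\Pi}_{s/s,p}\}$. *)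

theory Defs
  imports "HOL-Analysis.Analysis" "HOL-Computational_Algebra.Polynomial" "HOL-Computational_Algebra.Polynomial_Factorial" "HOL-Computational_Algebra.Field_as_Ring"
    "HOL-Library.Landau_Symbols" "HOL-Library.Extended_Real"
begin

text \<open>A real rational function given by numerator p and denominator q (q nonzero),
  always taken in lowest terms: numerator and denominator are divided by their gcd.\<close>
definition lt_num :: "real poly \<Rightarrow> real poly \<Rightarrow> real poly" where
  "lt_num p q = p div gcd p q"
definition lt_den :: "real poly \<Rightarrow> real poly \<Rightarrow> real poly" where
  "lt_den p q = q div gcd p q"

definition rat_fun :: "real poly \<Rightarrow> real poly \<Rightarrow> real \<Rightarrow> real" where
  "rat_fun p q x = poly (lt_num p q) x / poly (lt_den p q) x"

definition is_pole :: "real poly \<Rightarrow> real poly \<Rightarrow> real \<Rightarrow> bool" where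
  "is_pole p q x \<longleftrightarrow> poly (lt_den p q) x = 0"

definition abs_mono_at :: "real poly \<Rightarrow> real poly \<Rightarrow> real \<Rightarrow> bool" where
  "abs_mono_at p q x \<longleftrightarrow> \<not> is_pole p q x \<and> (\<forall>k::nat. (deriv ^^ k) (rat_fun p q) x \<ge> 0)"

definition radius_am :: "real poly \<Rightarrow> real poly \<Rightarrow> ereal" where
  "radius_am p q = Sup (ereal ` ({r. r \<ge> 0 \<and> (\<forall>x\<in>{-r..0}. abs_mono_at p q x)} \<union> {0}))"

definition den :: "real \<Rightarrow> nat \<Rightarrow> real poly" where
  "den a s = [:1, -a:] ^ s"

text \<open>The class hat-Pi_{s/s,p}, as pairs (P, a) representing P(z)/(1-az)^s.\<close>
definition Pihat :: "nat \<Rightarrow> nat \<Rightarrow> (real poly \<times> real) set" where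
  "Pihat s p = {(P, a). degree P \<le> s \<and>
      (\<lambda>z. rat_fun P (den a s) z - exp z) \<in> O[at 0](\<lambda>z. z ^ (p + 1))}"

definition Rhat :: "nat \<Rightarrow> nat \<Rightarrow> ereal" where
  "Rhat s p = Sup ((\<lambda>(P, a). radius_am P (den a s)) ` Pihat s p)"

definition psi_num :: "real \<Rightarrow> real poly" where
  "psi_num a = [:1, 1 - 3*a, (6*a^2 - 6*a + 1) / 2, (-6*a^3 + 18*a^2 - 9*a + 1) / 6:]"

end

theory Submission
  imports Defs "HOL-Real_Asymp.Real_Asymp"
begin

definition cc0 :: "real \<Rightarrow> real" where "cc0 a = (6*a^3-18*a^2+9*a-1)/(6*a^3)"
definition cc1 :: "real \<Rightarrow> real" where "cc1 a = (12*a^2-8*a+1)/(2*a^3)"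
definition cc2 :: "real \<Rightarrow> real" where "cc2 a = (-8*a^2+7*a-1)/(2*a^3)"
definition cc3 :: "real \<Rightarrow> real" where "cc3 a = (6*a^2-6*a+1)/(6*a^3)"

definition G :: "real \<Rightarrow> nat \<Rightarrow> real \<Rightarrow> real" where
  "G a k x = (if k = 0 then cc0 a else 0) + a^k * (cc1 a * pochhammer 1 k / (1-a*x)^(k+1)
     + cc2 a * pochhammer 2 k / (1-a*x)^(k+2) + cc3 a * pochhammer 3 k / (1-a*x)^(k+3))"

definition hh :: "real \<Rightarrow> nat \<Rightarrow> real \<Rightarrow> real" where
  "hh a k t = (12*a^2-8*a+1) + (-8*a^2+7*a-1)*(real k+1)*t + (6*a^2-6*a+1)*((real k+1)*(real k+2)/6)*t^2"
definition pp :: "real \<Rightarrow> real \<Rightarrow> real" where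
  "pp a t = (6*a^3-18*a^2+9*a-1) + 3*(12*a^2-8*a+1)*t + 3*(-8*a^2+7*a-1)*t^2 + (6*a^2-6*a+1)*t^3"

lemma poch2: "pochhammer (2::real) k = fact k * (real k + 1)"
  by (induction k) (simp_all add: pochhammer_Suc algebra_simps)
lemma poch3: "pochhammer (3::real) k = fact k * ((real k + 1) * (real k + 2) / 2)"
proof (induction k)
  case 0 then show ?case by simp
next
  case (Suc k)
  have "pochhammer (3::real) (Suc k) = fact k * ((real k + 1) * (real k + 2) / 2) * (3 + real k)"
    by (simp add: pochhammer_Suc Suc)
  also have "\<dots> = fact (Suc k) * ((real (Suc k) + 1) * (real (Suc k) + 2) / 2)"
    by (simp add: algebra_simps)
  finally show ?case .
qed
lemma hh_div:
  assumes "a \<noteq> 0"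
  shows "hh a k t / (2*a^3) = cc1 a + cc2 a * (real k + 1) * t + cc3 a * (((real k + 1) * (real k + 2))/2) * t^2"
proof -
  have "hh a k t / (2*a^3) = (12*a^2-8*a+1)/(2*a^3) + (-8*a^2+7*a-1)*(real k+1)*t/(2*a^3)
     + (6*a^2-6*a+1)*((real k+1)*(real k+2)/6)*t^2/(2*a^3)"
    unfolding hh_def by (simp only: add_divide_distrib)
  also have "(12*a^2-8*a+1)/(2*a^3) = cc1 a" by (simp add: cc1_def)
  also have "(-8*a^2+7*a-1)*(real k+1)*t/(2*a^3) = cc2 a * (real k + 1) * t" by (simp add: cc2_def)
  also have "(6*a^2-6*a+1)*((real k+1)*(real k+2)/6)*t^2/(2*a^3) = cc3 a * (((real k + 1) * (real k + 2))/2) * t^2"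
    by (simp add: cc3_def)
  finally show ?thesis .
qed


lemma G_form:
  assumes "a \<noteq> 0" "1 - a*x \<noteq> 0" "k \<ge> 1"
  shows "G a k x = a^k * fact k / (2*a^3) * (1/(1-a*x))^(k+1) * hh a k (1/(1-a*x))"
proof -
  define y where "y = 1 - a*x"
  define t where "t = 1/y"
  have y: "y \<noteq> 0" using assms y_def by simp
  have p1: "1 / y^(k+1) = t^(k+1)" unfolding t_def by (simp add: power_one_over)
  have p2: "1 / y^(k+2) = t^(k+1) * t" unfolding t_def by (simp add: power_one_over)
  have p3: "1 / y^(k+3) = t^(k+1) * t^2" unfolding t_def by (simp add: power_one_over power_add power2_eq_square power3_eq_cube)
  have "G a k x = a^k * (cc1 a * fact k * (1 / y^(k+1)) + cc2 a * (fact k * (real k + 1)) * (1 / y^(k+2))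
        + cc3 a * (fact k * ((real k + 1) * (real k + 2) / 2)) * (1/y^(k+3)))"
    unfolding G_def y_def using assms(3)
    by (simp add: pochhammer_fact[symmetric] poch2 poch3)
  also have "\<dots> = a^k * fact k * t^(k+1) * (cc1 a + cc2 a * (real k + 1) * t + cc3 a * (((real k + 1) * (real k + 2))/2) * t^2)"
    unfolding p1 p2 p3 by (simp add: algebra_simps)
  also have "\<dots> = a^k * fact k * t^(k+1) * (hh a k t / (2*a^3))"
    by (simp add: hh_div[OF assms(1)])
  finally show ?thesis unfolding t_def y_def by simp
qed

lemma G0_form:
  assumes "a \<noteq> 0" "1 - a*x \<noteq> 0"
  shows "G a 0 x = pp a (1/(1-a*x)) / (6*a^3)"
proof -
  define t where "t = 1/(1 - a*x)"
  have "G a 0 x = cc0 a + (cc1 a * t + cc2 a * t^2 + cc3 a * t^3)"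
    unfolding G_def t_def by (simp add: power_one_over power2_eq_square)
  also have "\<dots> = pp a t / (6*a^3)"
    unfolding pp_def add_divide_distrib using assms(1)
    by (simp add: cc0_def cc1_def cc2_def cc3_def field_simps)
  finally show ?thesis unfolding t_def .
qed

lemma inv_pow_deriv:
  assumes "1 - a*x \<noteq> (0::real)"
  shows "((\<lambda>x. c / (1-a*x)^n) has_real_derivative (c * real n * a / (1-a*x)^(Suc n))) (at x)"
proof -
  have "((\<lambda>x. c / (1-a*x)^n) has_real_derivative
      (- (c * (real n * (1-a*x)^(n-1) * (0 - a)))) / ((1-a*x)^n * (1-a*x)^n)) (at x)"
    using assms by (auto intro!: derivative_eq_intros)
  moreover have "(- (c * (real n * (1-a*x)^(n-1) * (0 - a)))) / ((1-a*x)^n * (1-a*x)^n)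
       = c * real n * a / (1-a*x)^(Suc n)"
  proof (cases n)
    case 0 then show ?thesis by simp
  next
    case (Suc m)
    define y where "y = 1 - a*x"
    have y: "y \<noteq> 0" using assms y_def by simp
    have "y^n * y^n = y^m * y^(Suc n)" using Suc by (simp add: power_Suc)
    then show ?thesis using Suc y unfolding y_def[symmetric]
      by (simp add: field_simps)
  qed
  ultimately show ?thesis by simp
qed

lemma G_deriv:
  assumes "1 - a*x \<noteq> 0"
  shows "(G a k has_real_derivative G a (Suc k) x) (at x)"
proof -
  have e: "G a k = (\<lambda>x. (if k = 0 then cc0 a else 0) + (a^k * cc1 a * pochhammer 1 k) / (1-a*x)^(k+1)
     + (a^k * cc2 a * pochhammer 2 k) / (1-a*x)^(k+2) + (a^k * cc3 a * pochhammer 3 k) / (1-a*x)^(k+3))"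
    unfolding G_def by (auto simp: field_simps)
  let ?c1 = "a^k * cc1 a * pochhammer 1 k" and ?c2 = "a^k * cc2 a * pochhammer 2 k"
    and ?c3 = "a^k * cc3 a * pochhammer 3 k"
  have "((\<lambda>x. (if k = 0 then cc0 a else 0) + ?c1 / (1-a*x)^(k+1)
     + ?c2 / (1-a*x)^(k+2) + ?c3 / (1-a*x)^(k+3)) has_real_derivative
     0 + ?c1 * real (k+1) * a / (1-a*x)^(Suc (k+1)) + ?c2 * real (k+2) * a / (1-a*x)^(Suc (k+2))
     + ?c3 * real (k+3) * a / (1-a*x)^(Suc (k+3))) (at x)"
    by (intro DERIV_add DERIV_const inv_pow_deriv assms)
  moreover have "0 + ?c1 * real (k+1) * a / (1-a*x)^(Suc (k+1)) + ?c2 * real (k+2) * a / (1-a*x)^(Suc (k+2))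
     + ?c3 * real (k+3) * a / (1-a*x)^(Suc (k+3)) = G a (Suc k) x"
    unfolding G_def by (simp add: pochhammer_Suc field_simps)
  ultimately show ?thesis unfolding e by simp
qed


lemma hh_scaled:
  assumes "y \<noteq> 0"
  shows "y^2 * hh a k (1/y) = (12*a^2-8*a+1)*y^2 + (-8*a^2+7*a-1)*(real k+1)*y + (6*a^2-6*a+1)*((real k+1)*(real k+2)/6)"
  unfolding hh_def using assms by (simp add: field_simps power2_eq_square)

lemma Q2_id:
  fixes s a :: real
  assumes s2: "s* s = 2"
  shows "(12*a^2-8*a+1)*(1 + a*(2+2* s))^2 + (-8*a^2+7*a-1)*3*(1 + a*(2+2* s)) + (6*a^2-6*a+1)*2
     = a * (4*a - 2 + s) * ((12+10* s) - (72+52* s)*a + (144+96* s)*a^2) / 4"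
  proof -
    have s2': "\<And>X. s*(s*X) = 2*X" using s2 by (metis mult.assoc)
    show ?thesis using s2 by (simp add: algebra_simps power2_eq_square power3_eq_cube s2')
  qed

lemma Q1_id:
  fixes s a :: real
  assumes s2: "s* s = 2"
  shows "(12*a^2-8*a+1)*(1 + a*(2+2* s))^2 + (-8*a^2+7*a-1)*2*(1 + a*(2+2* s)) + (6*a^2-6*a+1)
     = a^2 * (4*a - 2 + s) * ((144+96* s)*a - (56+36* s)) / 4"
  proof -
    have s2': "\<And>X. s*(s*X) = 2*X" using s2 by (metis mult.assoc)
    show ?thesis using s2 by (simp add: algebra_simps power2_eq_square power3_eq_cube s2')
  qed


lemma s_facts: "sqrt 2 * sqrt 2 = (2::real)" "sqrt (2::real) > 1414/1000" "sqrt (2::real) < 14143/10000" "sqrt (2::real) > 0"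
proof -
  show "sqrt 2 * sqrt 2 = (2::real)" by simp
  show "sqrt (2::real) > 1414/1000" by (rule real_less_rsqrt) (simp add: power2_eq_square)
  show "sqrt (2::real) < 14143/10000" by (rule real_less_lsqrt) (simp_all add: power2_eq_square) 
  show "sqrt (2::real) > 0" by simp
qed


lemma fail_small:
  fixes s a :: real
  assumes s2: "s* s = 2" and sl: "1414/1000 < s" and su: "s < 14143/10000"
    and a0: "0 < a" and a1: "a < (2-s)/4"
  shows "hh a 2 (1/(1 + a*(2+2* s))) < 0"
proof -
  define y where "y = 1 + a*(2+2* s)"
  have y: "y > 0" unfolding y_def using a0 sl by (simp add: add_pos_pos)
  have "(72+52* s)*a \<le> (72+52* s)*0.15" using a1 sl by (intro mult_left_mono) auto
  then have "(72+52* s)*a \<le> 54/5 + 39/5* s" by (simp add: algebra_simps)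
  moreover have "(144+96* s)*a^2 \<ge> 0" using sl by simp
  ultimately have q: "(12+10* s) - (72+52* s)*a + (144+96* s)*a^2 > 0" using sl by linarith
  have n: "4*a - 2 + s < 0" using a1 by simp
  have "a * (4*a - 2 + s) < 0" using a0 n by (simp add: mult_pos_neg)
  then have neg: "a * (4*a - 2 + s) * ((12+10* s) - (72+52* s)*a + (144+96* s)*a^2) / 4 < 0"
    using q by (simp add: mult_neg_pos)
  have "y^2 * hh a 2 (1/y) = (12*a^2-8*a+1)*y^2 + (-8*a^2+7*a-1)*(real 2+1)*y + (6*a^2-6*a+1)*((real 2+1)*(real 2+2)/6)"
    using hh_scaled y by simp
  also have "\<dots> = a * (4*a - 2 + s) * ((12+10* s) - (72+52* s)*a + (144+96* s)*a^2) / 4"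
    using Q2_id[OF s2, of a] unfolding y_def by simp
  finally have "y^2 * hh a 2 (1/y) = a * (4*a - 2 + s) * ((12+10* s) - (72+52* s)*a + (144+96* s)*a^2) / 4" .
  with neg have "y^2 * hh a 2 (1/y) < 0" by simp
  then have "hh a 2 (1/y) < 0" using y by (simp add: mult_less_0_iff)
  then show ?thesis unfolding y_def .
qed

lemma fail_mid:
  fixes s a :: real
  assumes s2: "s* s = 2" and sl: "1414/1000 < s" and su: "s < 14143/10000"
    and a0: "(2-s)/4 < a" and a1: "a \<le> 7/20"
  shows "hh a 1 (1/(1 + a*(2+2* s))) < 0"
proof -
  define y where "y = 1 + a*(2+2* s)"
  have apos: "a > 0" using a0 su by simp
  have y: "y > 0" unfolding y_def using apos sl by (simp add: add_pos_pos)
  have "(144+96* s)*a \<le> (144+96* s)*(7/20)" using a1 sl by (intro mult_left_mono) auto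
  then have "(144+96* s)*a \<le> 252/5 + 168/5* s" by (simp add: algebra_simps)
  then have l: "(144+96* s)*a - (56+36* s) < 0" using sl by linarith
  have n: "4*a - 2 + s > 0" using a0 by simp
  have "a^2 * (4*a - 2 + s) > 0" using apos n by simp
  then have neg: "a^2 * (4*a - 2 + s) * ((144+96* s)*a - (56+36* s)) / 4 < 0"
    using l by (simp add: mult_pos_neg)
  have "y^2 * hh a 1 (1/y) = (12*a^2-8*a+1)*y^2 + (-8*a^2+7*a-1)*(real 1+1)*y + (6*a^2-6*a+1)*((real 1+1)*(real 1+2)/6)"
    using hh_scaled y by simp
  also have "\<dots> = a^2 * (4*a - 2 + s) * ((144+96* s)*a - (56+36* s)) / 4"
    using Q1_id[OF s2, of a] unfolding y_def by simp
  finally have "y^2 * hh a 1 (1/y) = a^2 * (4*a - 2 + s) * ((144+96* s)*a - (56+36* s)) / 4" .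
  with neg have "y^2 * hh a 1 (1/y) < 0" by simp
  then have "hh a 1 (1/y) < 0" using y by (simp add: mult_less_0_iff)
  then show ?thesis unfolding y_def .
qed

lemma fail_5: "1/3 < a \<Longrightarrow> a < 1 \<Longrightarrow> hh a 5 1 < 0"
proof -
  assume h: "1/3 < a" "a < 1"
  have "hh a 5 1 = 2 * (3*a - 1) * (a - 1)" unfolding hh_def by (simp add: algebra_simps power2_eq_square)
  moreover have "(3*a - 1) * (a - 1) < 0" using h by (simp add: mult_pos_neg)
  ultimately show ?thesis by linarith
qed

lemma fail_6: "19/20 \<le> a \<Longrightarrow> a \<le> 3 \<Longrightarrow> hh a 6 (7/10) < 0"
proof -
  assume h: "19/20 \<le> a" "a \<le> 3"
  have e: "hh a 6 (7/10) = (6/25)*a^2 - (57/50)*a + 101/150" unfolding hh_def by (simp add: algebra_simps power2_eq_square)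
  have "(a - 19/20) * (a - 3) \<le> 0" using h by (simp add: mult_nonneg_nonpos)
  then have "a^2 \<le> (79/20)*a - 57/20" by (simp add: field_simps power2_eq_square)
  then show ?thesis unfolding e using h by linarith
qed

lemma fail_3: "3 \<le> a \<Longrightarrow> hh a 3 (4/5) < 0"
proof -
  assume h: "3 \<le> a"
  have e: "hh a 3 (4/5) = -(4/5)*a*(a-2) - 1/15" unfolding hh_def by (simp add: field_simps power2_eq_square)
  have "a*(a-2) \<ge> 0" using h by simp
  then show ?thesis unfolding e by linarith
qed

lemma neg_6: "a < 0 \<Longrightarrow> hh a 6 1 > 0"
proof -
  assume h: "a < 0"
  have e: "hh a 6 1 = 12*a^2 - 15*a + 10/3" unfolding hh_def by (simp add: algebra_simps power2_eq_square)
  have "a^2 \<ge> 0" by simp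
  then show ?thesis unfolding e using h by linarith
qed


lemma hh_star:
  fixes s t :: real
  assumes s2: "s* s = 2"
  shows "hh ((2-s)/4) k t = (3-2* s)/2 + (s-2)/4*(real k+1)*t + (real k+1)*(real k+2)/24*t^2"
proof -
  have s2': "\<And>X. s*(s*X) = 2*X" using s2 by (metis mult.assoc)
  show ?thesis unfolding hh_def using s2 by (simp add: field_simps power2_eq_square s2')
qed

lemma hh_star_decomp:
  fixes s t :: real
  assumes s2: "s* s = 2"
  shows "hh ((2-s)/4) k t = (3-2* s)/2 * ((real k - 1)*(real k - 2))/6
     + (t - (2-s)) * ((s-2)/4*(real k+1) + (real k+1)*(real k+2)*(t + (2-s))/24)"
proof -
  have s2': "\<And>X. s*(s*X) = 2*X" using s2 by (metis mult.assoc)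
  show ?thesis unfolding hh_star[OF s2] using s2 by (simp add: field_simps power2_eq_square s2')
qed

lemma nat_prod_nonneg: "((real k - 1)*(real k - 2)) \<ge> 0"
proof (cases "k \<le> 1")
  case True
  then have "k = 0 \<or> k = 1" by auto
  then show ?thesis by auto
next
  case False
  then have "real k \<ge> 2" by simp
  then show ?thesis by simp
qed

lemma hh_star_nonneg:
  fixes s t :: real
  assumes s2: "s* s = 2" and sl: "1414/1000 < s" and su: "s < 14143/10000"
    and t: "2 - s \<le> t" and k: "k \<ge> 1"
  shows "hh ((2-s)/4) k t \<ge> 0"
proof -
  have A: "(3-2* s)/2 > 0" using su by simp
  have "(3-2* s)/2 * ((real k - 1)*(real k - 2))/6 \<ge> 0"
    using A nat_prod_nonneg[of k] by simp
  moreover have "(s-2)/4*(real k+1) + (real k+1)*(real k+2)*(t + (2-s))/24 \<ge> 0"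
  proof -
    have "(real k+1)*(real k+2)*(t + (2-s))/24 \<ge> (real k+1)*(real k+2)*(2*(2-s))/24"
      using t k by (intro divide_right_mono mult_left_mono) auto
    moreover have "(real k+2)*(2*(2-s))/24 \<ge> 3*(2*(2-s))/24"
      using k su by (intro divide_right_mono mult_right_mono) auto
    then have "(real k+1)*((real k+2)*(2*(2-s))/24) \<ge> (real k+1)*(3*(2*(2-s))/24)"
      by (intro mult_left_mono) auto
    ultimately have "(real k+1)*(real k+2)*(t + (2-s))/24 \<ge> (real k+1)*((2-s)/4)"
      by (simp add: field_simps)
    moreover have "(s-2)/4*(real k+1) = -((real k+1)*((2-s)/4))" by (simp add: field_simps)
    ultimately show ?thesis by linarith
  qed
  then have "(t - (2-s)) * ((s-2)/4*(real k+1) + (real k+1)*(real k+2)*(t + (2-s))/24) \<ge> 0"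
    using t by simp
  ultimately show ?thesis unfolding hh_star_decomp[OF s2] by simp
qed

lemma hh_star_2:
  fixes s t :: real
  assumes s2: "s* s = 2"
  shows "hh ((2-s)/4) 2 t = (t - (2-s)) * (t - (2-s)/2) / 2"
proof -
  have s2': "\<And>X. s*(s*X) = 2*X" using s2 by (metis mult.assoc)
  show ?thesis unfolding hh_star[OF s2] using s2 by (simp add: field_simps power2_eq_square s2')
qed

lemma pp_star:
  fixes s t :: real
  assumes s2: "s* s = 2"
  shows "pp ((2-s)/4) t = (29/8 - 41* s/16) + (t - (2-s))^3/4"
proof -
  have s2': "\<And>X. s*(s*X) = 2*X" using s2 by (metis mult.assoc)
  show ?thesis unfolding pp_def using s2 by (simp add: field_simps power2_eq_square power3_eq_cube s2')
qed

lemma pp_star_pos: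
  fixes s t :: real
  assumes s2: "s* s = 2" and sl: "1414/1000 < s" and su: "s < 14143/10000"
    and t: "2 - s \<le> t"
  shows "pp ((2-s)/4) t > 0"
proof -
  have "41* s < 58"
  proof -
    have "(41* s)*(41* s) = 3362" using s2 by (simp add: algebra_simps)
    show ?thesis
    proof (rule ccontr)
      assume "\<not> 41* s < 58"
      then have h: "58 \<le> 41* s" by simp
      have "58*58 \<le> (41* s)*(41* s)" by (rule mult_mono[OF h h]) (use h in auto)
      with \<open>(41* s)*(41* s) = 3362\<close> show False by simp
    qed
  qed
  moreover have "(t - (2-s))^3 \<ge> 0" using t by simp
  ultimately show ?thesis unfolding pp_star[OF s2] by linarith
qed



lemma poly_den: "poly (den a s) x = (1 - a*x)^s"
  by (simp add: den_def mult.commute)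

lemma rat_fun_eq:
  assumes "poly q x \<noteq> 0"
  shows "rat_fun p q x = poly p x / poly q x"
proof -
  let ?g = "gcd p q"
  have p: "p = lt_num p q * ?g" unfolding lt_num_def by simp
  have q: "q = lt_den p q * ?g" unfolding lt_den_def by simp
  have "poly q x = poly (lt_den p q) x * poly ?g x" by (subst q) simp
  with assms have g: "poly ?g x \<noteq> 0" by auto
  have "poly p x / poly q x = (poly (lt_num p q) x * poly ?g x) / (poly (lt_den p q) x * poly ?g x)"
    by (subst p, subst q) simp
  also have "\<dots> = poly (lt_num p q) x / poly (lt_den p q) x" using g by simp
  finally show ?thesis unfolding rat_fun_def by simp
qed

lemma not_pole:
  assumes "poly q x \<noteq> 0"
  shows "\<not> is_pole p q x"
proof -
  have q: "q = lt_den p q * gcd p q" unfolding lt_den_def by simp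
  have "poly q x = poly (lt_den p q) x * poly (gcd p q) x" by (subst q) simp
  with assms show ?thesis unfolding is_pole_def by auto
qed


lemma psi_num_poly: "poly (psi_num a) x = 1 + (1 - 3*a)*x + (6*a^2 - 6*a + 1)/2 * x^2
   + (-6*a^3 + 18*a^2 - 9*a + 1)/6 * x^3"
  by (simp add: psi_num_def algebra_simps power2_eq_square power3_eq_cube)

lemma psi_pf:
  assumes "a \<noteq> 0" "1 - a*x \<noteq> 0"
  shows "poly (psi_num a) x / (1 - a*x)^3 = G a 0 x"
proof -
  have "poly (psi_num a) x = cc0 a * (1-a*x)^3 + cc1 a * (1-a*x)^2 + cc2 a * (1-a*x) + cc3 a"
    using assms(1) unfolding psi_num_poly cc0_def cc1_def cc2_def cc3_def
    by (simp add: field_simps) algebra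
  note eq = this
  have pf: "\<And>y c0 c1 c2 c3::real. y \<noteq> 0 \<Longrightarrow> (c0*y^3+c1*y^2+c2*y+c3)/y^3 = c0 + (c1/y^(0+1) + c2/y^(0+2) + c3/y^(0+3))"
proof -
  fix y c0 c1 c2 c3 :: real assume y: "y \<noteq> 0"
  have "(c0*y^3+c1*y^2+c2*y+c3)/y^3 = c0*y^3/y^3 + c1*y^2/y^3 + c2*y/y^3 + c3/y^3"
    by (simp add: add_divide_distrib)
  also have "\<dots> = c0 + c1/y + c2/y^2 + c3/y^3"
    using y by (simp add: power2_eq_square power3_eq_cube)
  finally show "(c0*y^3+c1*y^2+c2*y+c3)/y^3 = c0 + (c1/y^(0+1) + c2/y^(0+2) + c3/y^(0+3))" by (simp add: add.assoc power2_eq_square)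
qed
  have "G a 0 x = cc0 a + (cc1 a/(1-a*x)^(0+1) + cc2 a/(1-a*x)^(0+2) + cc3 a/(1-a*x)^(0+3))"
    unfolding G_def by (simp only: pochhammer_0 power_0 simp_thms if_True mult_1 mult_1_right)
  also have "\<dots> = poly (psi_num a) x / (1 - a*x)^3"
    unfolding eq by (rule pf[symmetric]) (use assms in auto)
  finally show ?thesis by simp
qed

lemma ev_ne: "1 - a*x \<noteq> (0::real) \<Longrightarrow> eventually (\<lambda>y. 1 - a*y \<noteq> 0) (nhds x)"
proof -
  assume h: "1 - a*x \<noteq> 0"
  have "open {y. 1 - a*y \<noteq> (0::real)}"
    by (intro open_Collect_neq continuous_intros)
  moreover have "x \<in> {y. 1 - a*y \<noteq> (0::real)}" using h by simp
  ultimately have "eventually (\<lambda>y. y \<in> {y. 1 - a*y \<noteq> (0::real)}) (nhds x)"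
    by (rule eventually_nhds_in_open)
  then show ?thesis by simp
qed

lemma iter_deriv:
  assumes "a \<noteq> 0"
  shows "1 - a*x \<noteq> 0 \<Longrightarrow> (deriv^^k) (rat_fun (psi_num a) (den a 3)) x = G a k x"
proof (induction k arbitrary: x)
  case 0
  have "poly (den a 3) x \<noteq> 0" using 0 by (simp add: poly_den)
  then show ?case using psi_pf[OF assms 0] by (simp add: rat_fun_eq poly_den)
next
  case (Suc k)
  have "eventually (\<lambda>y. (deriv^^k) (rat_fun (psi_num a) (den a 3)) y = G a k y) (nhds x)"
    using ev_ne[OF Suc.prems] by (rule eventually_mono) (rule Suc.IH)
  then have "deriv ((deriv^^k) (rat_fun (psi_num a) (den a 3))) x = deriv (G a k) x"
    by (rule deriv_cong_ev) simp
  also have "\<dots> = G a (Suc k) x" by (rule DERIV_imp_deriv[OF G_deriv[OF Suc.prems]])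
  finally show ?case by simp
qed



lemma radius_lt:
  assumes "-r0 < x1" "x1 \<le> 0" "\<not> abs_mono_at p q x1"
  shows "radius_am p q < ereal r0"
proof -
  have "radius_am p q \<le> ereal (-x1)"
    unfolding radius_am_def
  proof (rule Sup_least)
    fix y assume "y \<in> ereal ` ({r. r \<ge> 0 \<and> (\<forall>x\<in>{-r..0}. abs_mono_at p q x)} \<union> {0})"
    then obtain r where y: "y = ereal r" and r: "r \<in> {r. r \<ge> 0 \<and> (\<forall>x\<in>{-r..0}. abs_mono_at p q x)} \<union> {0}"
      by auto
    show "y \<le> ereal (-x1)"
    proof (cases "r = 0")
      case True then show ?thesis using y assms(2) by simp
    next
      case False
      then have r1: "\<forall>x\<in>{-r..0}. abs_mono_at p q x" using r by auto
      have "r \<le> -x1"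
      proof (rule ccontr)
        assume "\<not> r \<le> -x1"
        then have "x1 \<in> {-r..0}" using assms(2) by simp
        then show False using r1 assms(3) by blast
      qed
      then show ?thesis using y by simp
    qed
  qed
  also have "\<dots> < ereal r0" using assms(1) by simp
  finally show ?thesis .
qed

lemma radius_ge:
  assumes "r \<ge> 0" "\<forall>x\<in>{-r..0}. abs_mono_at p q x"
  shows "ereal r \<le> radius_am p q"
  unfolding radius_am_def by (rule Sup_upper) (use assms in auto)

lemma fail_at:
  assumes "a \<noteq> 0" "1 - a*x \<noteq> 0" "G a k x < 0"
  shows "\<not> abs_mono_at (psi_num a) (den a 3) x"
proof
  assume "abs_mono_at (psi_num a) (den a 3) x"
  then have "(deriv^^k) (rat_fun (psi_num a) (den a 3)) x \<ge> 0" unfolding abs_mono_at_def by blast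
  then show False using iter_deriv[OF assms(1,2), of k] assms(3) by simp
qed

lemma cont_fail:
  assumes "a > 0" "x0 < 0" "G a k x0 < 0"
  shows "\<exists>x1. x0 < x1 \<and> x1 \<le> 0 \<and> G a k x1 < 0"
proof -
  have "a*x0 < 0" using assms by (simp add: mult_pos_neg)
  then have ne: "1 - a*x0 \<noteq> 0" by simp
  have "isCont (G a k) x0" by (rule DERIV_isCont[OF G_deriv[OF ne]])
  then have "(G a k \<longlongrightarrow> G a k x0) (at x0)" by (simp add: isCont_def)
  then have "eventually (\<lambda>y. G a k y < 0) (at x0)"
    using assms(3) by (rule order_tendstoD(2))
  then have "eventually (\<lambda>y. G a k y < 0) (at_right x0)"
    by (simp add: eventually_at_split)
  then obtain b where b: "b > x0" "\<And>y. y > x0 \<Longrightarrow> y < b \<Longrightarrow> G a k y < 0"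
    unfolding eventually_at_right_field by blast
  define y where "y = (x0 + min b 0)/2"
  have "x0 < y" "y < b" "y \<le> 0" using b(1) assms(2) unfolding y_def by auto
  then show ?thesis using b(2) by blast
qed


lemma sqrt8: "sqrt 8 = 2 * sqrt (2::real)"
proof -
  have "sqrt (8::real) = sqrt (4 * 2)" by simp
  also have "\<dots> = sqrt 4 * sqrt 2" by (rule real_sqrt_mult)
  also have "sqrt (4::real) = 2" by (simp add: real_sqrt_unique[of 2])
  finally show ?thesis by simp
qed

lemma G_neg:
  assumes "a > 0" "x \<le> 0" "k \<ge> 1" "hh a k (1/(1-a*x)) < 0"
  shows "G a k x < 0"
proof -
  have "a*x \<le> 0" using assms by (simp add: mult_pos_neg mult_nonneg_nonpos)
  then have y: "1 - a*x > 0" by simp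
  have "a^k * fact k / (2*a^3) * (1/(1-a*x))^(k+1) > 0" using assms(1) y by simp
  moreover have "G a k x = a^k * fact k / (2*a^3) * (1/(1-a*x))^(k+1) * hh a k (1/(1-a*x))"
    by (rule G_form) (use assms y in auto)
  ultimately show ?thesis using assms(4) mult_pos_neg by metis
qed

lemma fail_radius:
  assumes "a > 0" "-(2 + sqrt 8) < x" "x \<le> 0" "k \<ge> 1" "hh a k (1/(1-a*x)) < 0"
  shows "radius_am (psi_num a) (den a 3) < ereal (2 + sqrt 8)"
proof -
  have "a*x \<le> 0" using assms by (simp add: mult_pos_neg mult_nonneg_nonpos)
  then have y: "1 - a*x \<noteq> 0" by simp
  show ?thesis
    by (rule radius_lt[OF assms(2,3) fail_at[OF _ y G_neg[OF assms(1,3,4,5)]]]) (use assms in simp)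
qed

lemma fail_radius_edge:
  assumes "a > 0" "k \<ge> 1" "hh a k (1/(1 + a*(2 + sqrt 8))) < 0"
  shows "radius_am (psi_num a) (den a 3) < ereal (2 + sqrt 8)"
proof -
  define x0 where "x0 = -(2 + sqrt 8)"
  have x0: "x0 < 0" unfolding x0_def using real_sqrt_ge_zero[of 8] by linarith
  have "1 - a*x0 = 1 + a*(2 + sqrt 8)" unfolding x0_def by (simp add: algebra_simps)
  then have "hh a k (1/(1 - a*x0)) < 0" using assms(3) by metis
  then have "G a k x0 < 0" using G_neg[OF assms(1) _ assms(2)] x0 by simp
  then obtain x1 where x1: "x0 < x1" "x1 \<le> 0" "G a k x1 < 0" using cont_fail[OF assms(1) x0] by blast
  have "a*x1 \<le> 0" using assms x1 by (simp add: mult_pos_neg mult_nonneg_nonpos)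
  then have y: "1 - a*x1 \<noteq> 0" by simp
  show ?thesis
    by (rule radius_lt[OF _ x1(2) fail_at[OF _ y x1(3)]]) (use assms x1 x0_def in auto)
qed


lemma r0_pos: "2 + sqrt 8 > (0::real)"
  using real_sqrt_ge_zero[of 8] by linarith

lemma rad_neg:
  assumes "a < 0"
  shows "radius_am (psi_num a) (den a 3) < ereal (2 + sqrt 8)"
proof -
  have a0: "a \<noteq> 0" using assms by simp
  have "G a 6 0 = a^6 * fact 6 / (2*a^3) * (1/(1-a*0))^(6+1) * hh a 6 (1/(1-a*0))"
    by (rule G_form) (use a0 in auto)
  also have "\<dots> = (360 * a^3) * hh a 6 1"
    using a0 by (simp add: fact_numeral field_simps)
  finally have e: "G a 6 0 = (360 * a^3) * hh a 6 1" .
  have "360 * a^3 < 0" using assms by (simp add: power3_eq_cube mult_neg_pos mult_neg_neg)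
  then have "G a 6 0 < 0" unfolding e using neg_6[OF assms] mult_neg_pos by metis
  then show ?thesis by (intro radius_lt[OF _ _ fail_at[OF a0]]) (use r0_pos in auto)
qed

lemma rad_small:
  assumes "0 < a" "a < (2 - sqrt 2)/4"
  shows "radius_am (psi_num a) (den a 3) < ereal (2 + sqrt 8)"
proof -
  have "hh a 2 (1/(1 + a*(2 + 2 * sqrt 2))) < 0"
    by (rule fail_small) (use s_facts assms in auto)
  then show ?thesis by (intro fail_radius_edge[OF assms(1), of 2]) (auto simp: sqrt8)
qed

lemma rad_mid:
  assumes "(2 - sqrt 2)/4 < a" "a \<le> 7/20"
  shows "radius_am (psi_num a) (den a 3) < ereal (2 + sqrt 8)"
proof -
  have "(2 - sqrt 2)/4 > 0" using s_facts(3) by simp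
  then have a0: "a > 0" using assms(1) by linarith
  have "hh a 1 (1/(1 + a*(2 + 2 * sqrt 2))) < 0"
    by (rule fail_mid) (use s_facts assms in auto)
  then show ?thesis by (intro fail_radius_edge[OF a0, of 1]) (auto simp: sqrt8)
qed

lemma rad_5:
  assumes "7/20 < a" "a < 1"
  shows "radius_am (psi_num a) (den a 3) < ereal (2 + sqrt 8)"
proof -
  have "hh a 5 (1/(1 - a*0)) < 0" using fail_5[of a] assms by simp
  then show ?thesis by (intro fail_radius[of a 0 5]) (use assms r0_pos in auto)
qed

lemma rad_6:
  assumes "1 \<le> a" "a \<le> 3"
  shows "radius_am (psi_num a) (den a 3) < ereal (2 + sqrt 8)"
proof -
  have a0: "a > 0" using assms by simp
  have e: "1/(1 - a*(-(3/7)/a)) = 7/10" using a0 by simp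
  have "hh a 6 (1/(1 - a*(-(3/7)/a))) < 0" unfolding e using fail_6[of a] assms by simp
  moreover have "-(2 + sqrt 8) < -(3/7)/a"
  proof -
    have "3/7/a \<le> 3/7" using assms by (simp add: divide_le_eq)
    then show ?thesis using real_sqrt_ge_zero[of 8] by linarith
  qed
  ultimately show ?thesis by (intro fail_radius[of a "-(3/7)/a" 6]) (use a0 in auto)
qed

lemma rad_3:
  assumes "3 < a"
  shows "radius_am (psi_num a) (den a 3) < ereal (2 + sqrt 8)"
proof -
  have a0: "a > 0" using assms by simp
  have e: "1/(1 - a*(-(1/4)/a)) = 4/5" using a0 by simp
  have "hh a 3 (1/(1 - a*(-(1/4)/a))) < 0" unfolding e using fail_3[of a] assms by simp
  moreover have "-(2 + sqrt 8) < -(1/4)/a"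
  proof -
    have "1/4/a \<le> 1/4" using assms by (simp add: divide_le_eq)
    then show ?thesis using real_sqrt_ge_zero[of 8] by linarith
  qed
  ultimately show ?thesis by (intro fail_radius[of a "-(1/4)/a" 3]) (use a0 in auto)
qed


lemma deriv_poly_fun: "deriv (poly p) = poly (pderiv p)"
  by (rule ext) (rule DERIV_imp_deriv[OF poly_DERIV])

lemma rad_zero:
  shows "radius_am (psi_num 0) (den 0 3) < ereal (2 + sqrt 8)"
proof -
  have d: "den 0 3 = 1" by (simp add: den_def one_pCons[symmetric])
  have F: "rat_fun (psi_num 0) (den 0 3) = poly (psi_num 0)"
    by (rule ext) (simp add: d rat_fun_eq)
  have "(deriv^^2) (rat_fun (psi_num 0) (den 0 3)) = poly (pderiv (pderiv (psi_num 0)))"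
    unfolding F by (simp add: deriv_poly_fun numeral_2_eq_2)
  then have "(deriv^^2) (rat_fun (psi_num 0) (den 0 3)) (-3/2) = -1/2"
    by (simp add: psi_num_def pderiv_pCons)
  have "\<not> abs_mono_at (psi_num 0) (den 0 3) (-3/2)"
  proof
    assume "abs_mono_at (psi_num 0) (den 0 3) (-3/2)"
    then have "(deriv^^2) (rat_fun (psi_num 0) (den 0 3)) (-3/2) \<ge> 0" unfolding abs_mono_at_def by blast
    with \<open>(deriv^^2) (rat_fun (psi_num 0) (den 0 3)) (-3/2) = -1/2\<close> show False by simp
  qed
  moreover have "-(2 + sqrt 8) < (-3/2::real)"
    unfolding sqrt8 using s_facts(4) by linarith
  ultimately show ?thesis by (intro radius_lt) auto
qed


lemma star_y:
  fixes x :: real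
  defines "s \<equiv> sqrt 2"
  defines "a \<equiv> (2 - s)/4"
  shows "1 - a*x = 1 + s/2 + a*(-(2 + sqrt 8) - x)"
proof -
  have s2: "s* s = 2" unfolding s_def by simp
  have "a * (2 + sqrt 8) = s/2" unfolding a_def sqrt8 s_def[symmetric] using s2
    by (simp add: field_simps)
  then show ?thesis by (simp add: algebra_simps)
qed

lemma rad_star_ge:
  defines "a \<equiv> (2 - sqrt 2)/4"
  shows "ereal (2 + sqrt 8) \<le> radius_am (psi_num a) (den a 3)"
proof (rule radius_ge)
  show "0 \<le> 2 + sqrt (8::real)" using r0_pos by simp
  define s where "s = sqrt (2::real)"
  have s2: "s* s = 2" and sl: "1414/1000 < s" and su: "s < 14143/10000" using s_facts unfolding s_def by auto
  have a: "a = (2-s)/4" unfolding a_def s_def ..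
  have apos: "a > 0" unfolding a using su by simp
  show "\<forall>x\<in>{-(2 + sqrt 8)..0}. abs_mono_at (psi_num a) (den a 3) x"
  proof
    fix x assume x: "x \<in> {-(2 + sqrt 8)..0}"
    have ey: "1 - a*x = 1 + s/2 + a*(-(2 + sqrt 8) - x)" unfolding a s_def by (rule star_y)
    have "a*(-(2 + sqrt 8) - x) \<le> 0" using apos x by (simp add: mult_nonneg_nonpos)
    then have yu: "1 - a*x \<le> 1 + s/2" using ey by linarith
    have "a*x \<le> 0" using apos x by (simp add: mult_nonneg_nonpos)
    then have yl: "1 - a*x \<ge> 1" by simp
    have y0: "1 - a*x \<noteq> 0" using yl by simp
    have "(2 - s) * (1 - a*x) \<le> (2-s)*(1 + s/2)" using yu su by (intro mult_left_mono) auto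
    also have "(2-s)*(1 + s/2) = 1" using s2 by (simp add: field_simps)
    finally have "(2 - s) * (1 - a*x) \<le> 1" .
    then have t: "2 - s \<le> 1/(1 - a*x)" using yl by (simp add: le_divide_eq)
    have np: "\<not> is_pole (psi_num a) (den a 3) x"
      by (rule not_pole) (use y0 in \<open>simp add: poly_den\<close>)
    have "\<forall>k. (deriv^^k) (rat_fun (psi_num a) (den a 3)) x \<ge> 0"
    proof
      fix k
      have "(deriv^^k) (rat_fun (psi_num a) (den a 3)) x = G a k x"
        using iter_deriv[of a x k] apos y0 by simp
      moreover have "G a k x \<ge> 0"
      proof (cases "k = 0")
        case True
        have "pp a (1/(1-a*x)) > 0" unfolding a by (rule pp_star_pos[OF s2 sl su]) (use t a in simp)
        then show ?thesis using True G0_form[of a x] apos y0 by simp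
      next
        case False
        then have k: "k \<ge> 1" by simp
        have "hh a k (1/(1-a*x)) \<ge> 0" unfolding a by (rule hh_star_nonneg[OF s2 sl su]) (use t a k in auto)
        moreover have "a^k * fact k / (2*a^3) * (1/(1-a*x))^(k+1) > 0" using apos yl by simp
        moreover have "G a k x = a^k * fact k / (2*a^3) * (1/(1-a*x))^(k+1) * hh a k (1/(1-a*x))"
          using G_form[of a x k] apos y0 k by simp
        ultimately show ?thesis by (metis less_eq_real_def mult_nonneg_nonneg)
      qed
      ultimately show "(deriv^^k) (rat_fun (psi_num a) (den a 3)) x \<ge> 0" by simp
    qed
    then show "abs_mono_at (psi_num a) (den a 3) x" using np unfolding abs_mono_at_def by blast
  qed
qed


lemma rad_star_le:
  defines "a \<equiv> (2 - sqrt 2)/4"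
  shows "radius_am (psi_num a) (den a 3) \<le> ereal (2 + sqrt 8)"
  unfolding radius_am_def
proof (rule Sup_least)
  define s where "s = sqrt (2::real)"
  have s2: "s * s = 2" and sl: "1414/1000 < s" and su: "s < 14143/10000" using s_facts unfolding s_def by auto
  have a: "a = (2-s)/4" unfolding a_def s_def ..
  have apos: "a > 0" unfolding a using su by simp
  fix z assume "z \<in> ereal ` ({r. r \<ge> 0 \<and> (\<forall>x\<in>{-r..0}. abs_mono_at (psi_num a) (den a 3) x)} \<union> {0})"
  then obtain r where z: "z = ereal r" and r: "r \<in> {r. r \<ge> 0 \<and> (\<forall>x\<in>{-r..0}. abs_mono_at (psi_num a) (den a 3) x)} \<union> {0}"
    by auto
  show "z \<le> ereal (2 + sqrt 8)"
  proof (rule ccontr)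
    assume "\<not> z \<le> ereal (2 + sqrt 8)"
    then have rgt: "r > 2 + sqrt 8" using z by simp
    then have "r \<noteq> 0" using r0_pos by simp
    then have am: "\<forall>x\<in>{-r..0}. abs_mono_at (psi_num a) (den a 3) x" using r by auto
    define d where "d = min (r - (2 + sqrt 8)) 1 / 2"
    have d0: "d > 0" and d1: "d \<le> 1/2" and dr: "d \<le> (r - (2 + sqrt 8))/2"
      unfolding d_def using rgt by auto
    define x where "x = -(2 + sqrt 8) - d"
    have xin: "x \<in> {-r..0}" unfolding x_def using d0 dr r0_pos by auto
    have ey: "1 - a*x = 1 + s/2 + a*d" unfolding a s_def x_def by (subst star_y) simp
    have ad0: "a*d > 0" using apos d0 by simp
    have "a*d \<le> a*(1/2)" using apos d1 by (intro mult_left_mono) auto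
    then have ad1: "a*d < 1/2" unfolding a using sl by simp
    have ypos: "1 - a*x > 0" unfolding ey using ad0 sl by simp
    have py: "(2-s)*(1 - a*x) = 1 + (2-s)*(a*d)" unfolding ey using s2 by (simp add: field_simps)
    have "(2-s)*(a*d) > 0" using ad0 su by simp
    then have "(2-s)*(1 - a*x) > 1" using py by simp
    then have t1: "1/(1 - a*x) < 2 - s" using ypos by (simp add: divide_less_eq mult.commute)
    have "(2-s)*(a*d) < 1*(1/2)" using ad0 ad1 sl su by (intro mult_strict_mono) auto
    then have "(2-s)*(1 - a*x) < 2" using py by simp
    then have t2: "(2 - s)/2 < 1/(1 - a*x)" using ypos by (simp add: less_divide_eq mult.commute)
    define t where "t = 1/(1 - a*x)"
    have "hh a 2 t = (t - (2-s))*(t - (2-s)/2)/2" unfolding a by (rule hh_star_2[OF s2])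
    moreover have "(t - (2-s))*(t - (2-s)/2) < 0" using t1 t2 unfolding t_def[symmetric] by (simp add: mult_neg_pos)
    ultimately have "hh a 2 (1/(1 - a*x)) < 0" unfolding t_def by simp
    then have "G a 2 x < 0" using G_neg[OF apos, of x 2] xin by simp
    then have "\<not> abs_mono_at (psi_num a) (den a 3) x"
      using fail_at[of a x 2] apos ypos by simp
    then show False using am xin by blast
  qed
qed

lemma rad_star:
  shows "radius_am (psi_num ((2 - sqrt 2)/4)) (den ((2 - sqrt 2)/4) 3) = ereal (2 + sqrt 8)"
  using rad_star_le rad_star_ge by (rule antisym)

lemma rad_lt:
  assumes "a \<noteq> (2 - sqrt 2)/4"
  shows "radius_am (psi_num a) (den a 3) < ereal (2 + sqrt 8)"
proof -
  have "a < 0 \<or> a = 0 \<or> (0 < a \<and> a < (2 - sqrt 2)/4) \<or> ((2 - sqrt 2)/4 < a \<and> a \<le> 7/20)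
        \<or> (7/20 < a \<and> a < 1) \<or> (1 \<le> a \<and> a \<le> 3) \<or> 3 < a"
    using assms by linarith
  then show ?thesis
    using rad_neg rad_zero rad_small rad_mid rad_5 rad_6 rad_3 by blast
qed



lemma bigo_tendsto0:
  fixes f g :: "real \<Rightarrow> real"
  assumes "f \<in> O[F](g)" "(g \<longlongrightarrow> 0) F"
  shows "(f \<longlongrightarrow> 0) F"
proof -
  obtain c where c: "c > 0" "eventually (\<lambda>x. norm (f x) \<le> c * norm (g x)) F"
    using landau_o.bigE[OF assms(1)] by blast
  have "((\<lambda>x. norm (g x)) \<longlongrightarrow> 0) F" by (rule tendsto_norm_zero[OF assms(2)])
  then have "((\<lambda>x. c * norm (g x)) \<longlongrightarrow> 0) F" by (rule tendsto_mult_right_zero)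
  then show ?thesis by (rule Lim_null_comparison[OF c(2)])
qed

lemma poly_bigo_zero:
  "degree (D::real poly) < n \<Longrightarrow> (\<lambda>z. poly D z) \<in> O[at 0](\<lambda>z. z^n) \<Longrightarrow> D = 0"
proof (induction n arbitrary: D)
  case 0
  then show ?case by simp
next
  case (Suc n)
  obtain d D' where D: "D = pCons d D'" by (cases D) auto
  have "((\<lambda>z::real. z^Suc n) \<longlongrightarrow> 0^Suc n) (at 0)"
    by (rule tendsto_power[OF tendsto_ident_at])
  then have "((\<lambda>z::real. z^Suc n) \<longlongrightarrow> 0) (at 0)" by simp
  then have l0: "((\<lambda>z. poly D z) \<longlongrightarrow> 0) (at 0)" by (rule bigo_tendsto0[OF Suc.prems(2)])
  have "isCont (poly D) 0" by (rule DERIV_isCont[OF poly_DERIV])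
  then have "((\<lambda>z. poly D z) \<longlongrightarrow> poly D 0) (at 0)" by (simp add: isCont_def)
  then have "poly D 0 = 0" using l0 by (rule tendsto_unique[rotated 1]) simp
  then have d: "d = 0" using D by simp
  have ev: "eventually (\<lambda>z::real. z \<noteq> 0) (at 0)" by (simp add: eventually_at_filter)
  have "(\<lambda>z. z * poly D' z) \<in> O[at 0](\<lambda>z. z * z^n)"
    using Suc.prems(2) D d by simp
  then have "(\<lambda>z. poly D' z) \<in> O[at 0](\<lambda>z. z^n)"
    by (subst (asm) landau_o.big.mult_cancel_left) (use ev in auto)
  then have "D' = 0"
  proof (cases "D' = 0")
    case False
    then have "degree D' < n" using Suc.prems(1) D by simp
    with \<open>(\<lambda>z. poly D' z) \<in> O[at 0](\<lambda>z. z^n)\<close> show ?thesis using Suc.IH by blast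
  qed
  then show ?case using D d by simp
qed


definition RR :: "real \<Rightarrow> real \<Rightarrow> real" where
  "RR a z = (3*a^2/2 - a^3 - a/2) + (a^2/2 - a^3/2)*z - a^3/6*z^2"

lemma T_identity: "(1 + z + z^2/2 + z^3/6) * (1 - a*z)^3 - poly (psi_num a) z = z^4 * RR a z"
  unfolding psi_num_poly RR_def by (simp add: power2_eq_square power3_eq_cube power4_eq_xxxx algebra_simps divide_simps)

lemma exp_taylor3: "(\<lambda>z::real. exp z - (1 + z + z^2/2 + z^3/6)) \<in> O[at 0](\<lambda>z. z^4)"
  by real_asymp

lemma ev0: "eventually (\<lambda>z. 1 - a*z \<noteq> (0::real)) (at 0)"
proof -
  have "eventually (\<lambda>z. 1 - a*z \<noteq> (0::real)) (nhds 0)" using ev_ne[of a 0] by simp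
  then show ?thesis unfolding eventually_at_filter by (rule eventually_mono) simp
qed

lemma cont_bigo1: "isCont f (0::real) \<Longrightarrow> (f::real\<Rightarrow>real) \<in> O[at 0](\<lambda>_. 1)"
  by (rule bigoI_tendsto[where c = "f 0"]) (simp_all add: isCont_def)

lemma bnd1: "(\<lambda>z::real. (1 - a*z)^3) \<in> O[at 0](\<lambda>_. 1)"
  by (rule cont_bigo1) (intro continuous_intros)

lemma bnd2: "(\<lambda>z::real. RR a z / (1 - a*z)^3) \<in> O[at 0](\<lambda>_. 1)"
  unfolding RR_def by (rule cont_bigo1) (intro continuous_intros, simp)

lemma bnd3: "(\<lambda>z::real. RR a z) \<in> O[at 0](\<lambda>_. 1)"
  unfolding RR_def by (rule cont_bigo1) (intro continuous_intros)

lemma degree_psi: "degree (psi_num a) \<le> 3"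
  unfolding psi_num_def by (simp add: degree_pCons_eq_if)


lemma rat_fun_ev:
  "eventually (\<lambda>z. rat_fun P (den a 3) z = poly P z / (1 - a*z)^3) (at 0)"
  using ev0[of a] by (rule eventually_mono) (simp add: rat_fun_eq poly_den)

lemma pihat_char:
  assumes "(P, a) \<in> Pihat 3 3"
  shows "P = psi_num a"
proof -
  have dP: "degree P \<le> 3" and f: "(\<lambda>z. rat_fun P (den a 3) z - exp z) \<in> O[at 0](\<lambda>z. z ^ (3 + 1))"
    using assms unfolding Pihat_def by auto
  have f4: "(\<lambda>z. rat_fun P (den a 3) z - exp z) \<in> O[at 0](\<lambda>z. z ^ 4)" using f by (simp only: numeral_plus_one semiring_norm)
  have "(\<lambda>z. (rat_fun P (den a 3) z - exp z) + (exp z - (1 + z + z^2/2 + z^3/6))) \<in> O[at 0](\<lambda>z. z ^ 4)"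
    by (rule sum_in_bigo(1)[OF f4 exp_taylor3])
  moreover have ev1: "eventually (\<lambda>z. (rat_fun P (den a 3) z - exp z) + (exp z - (1 + z + z^2/2 + z^3/6))
       = poly P z / (1 - a*z)^3 - (1 + z + z^2/2 + z^3/6)) (at 0)"
    using rat_fun_ev[of P a] by (rule eventually_mono) simp
  note cg = landau_o.big.in_cong[OF ev1, of "\<lambda>z. z^4"]
  ultimately have g: "(\<lambda>z. poly P z / (1 - a*z)^3 - (1 + z + z^2/2 + z^3/6)) \<in> O[at 0](\<lambda>z. z ^ 4)"
    using cg by blast
  have "(\<lambda>z. (1 - a*z)^3 * (poly P z / (1 - a*z)^3 - (1 + z + z^2/2 + z^3/6))) \<in> O[at 0](\<lambda>z. 1 * z ^ 4)"
    by (rule landau_o.big.mult[OF bnd1 g])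
  then have h0: "(\<lambda>z. (1 - a*z)^3 * (poly P z / (1 - a*z)^3 - (1 + z + z^2/2 + z^3/6))) \<in> O[at 0](\<lambda>z. z ^ 4)"
    by (simp only: mult_1_left)
  have ev2: "eventually (\<lambda>z. (1 - a*z)^3 * (poly P z / (1 - a*z)^3 - (1 + z + z^2/2 + z^3/6))
      = poly P z - (1 + z + z^2/2 + z^3/6) * (1 - a*z)^3) (at 0)"
    using ev0[of a] by (rule eventually_mono) (simp add: right_diff_distrib)
  have h: "(\<lambda>z. poly P z - (1 + z + z^2/2 + z^3/6) * (1 - a*z)^3) \<in> O[at 0](\<lambda>z. z ^ 4)"
    using landau_o.big.in_cong[OF ev2, of "\<lambda>z. z^4"] h0 by blast
  have r0: "(\<lambda>z. z^4 * RR a z) \<in> O[at 0](\<lambda>z. z ^ 4 * 1)"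
    by (rule landau_o.big.mult[OF landau_o.big_refl bnd3])
  then have r: "(\<lambda>z. z^4 * RR a z) \<in> O[at 0](\<lambda>z. z ^ 4)" by (simp only: mult_1_right)
  have "(\<lambda>z. (poly P z - (1 + z + z^2/2 + z^3/6) * (1 - a*z)^3) + z^4 * RR a z) \<in> O[at 0](\<lambda>z. z ^ 4)"
    by (rule sum_in_bigo(1)[OF h r])
  moreover have "(\<lambda>z. (poly P z - (1 + z + z^2/2 + z^3/6) * (1 - a*z)^3) + z^4 * RR a z) = (\<lambda>z. poly (P - psi_num a) z)"
    by (rule ext) (simp add: T_identity[symmetric])
  ultimately have D: "(\<lambda>z. poly (P - psi_num a) z) \<in> O[at 0](\<lambda>z. z ^ 4)" by (simp only:)
  have "degree (P - psi_num a) \<le> max (degree P) (degree (psi_num a))" by (rule degree_diff_le_max)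
  then have "degree (P - psi_num a) < 4" using dP degree_psi[of a] by simp
  then have "P - psi_num a = 0" using D by (rule poly_bigo_zero)
  then show ?thesis by simp
qed

lemma psi_in: "(psi_num a, a) \<in> Pihat 3 3"
proof -
  have r0: "(\<lambda>z. z^4 * (RR a z / (1 - a*z)^3)) \<in> O[at 0](\<lambda>z. z ^ 4 * 1)"
    by (rule landau_o.big.mult[OF landau_o.big_refl bnd2])
  then have r: "(\<lambda>z. z^4 * (RR a z / (1 - a*z)^3)) \<in> O[at 0](\<lambda>z. z ^ 4)" by (simp only: mult_1_right)
  then have r': "(\<lambda>z. - (z^4 * (RR a z / (1 - a*z)^3))) \<in> O[at 0](\<lambda>z. z ^ 4)"
    by (simp only: landau_o.big.uminus_in_iff)
  have "(\<lambda>z. - (z^4 * (RR a z / (1 - a*z)^3)) - (exp z - (1 + z + z^2/2 + z^3/6))) \<in> O[at 0](\<lambda>z. z ^ 4)"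
    by (rule sum_in_bigo(2)[OF r' exp_taylor3])
  moreover have ev3: "eventually (\<lambda>z. - (z^4 * (RR a z / (1 - a*z)^3)) - (exp z - (1 + z + z^2/2 + z^3/6))
     = rat_fun (psi_num a) (den a 3) z - exp z) (at 0)"
    using eventually_conj[OF ev0[of a] rat_fun_ev[of "psi_num a" a]]
  proof (rule eventually_mono)
    fix z :: real assume z: "1 - a*z \<noteq> 0 \<and> rat_fun (psi_num a) (den a 3) z = poly (psi_num a) z / (1 - a*z)^3"
    have "poly (psi_num a) z = (1 + z + z^2/2 + z^3/6) * (1 - a*z)^3 - z^4 * RR a z"
      using T_identity[of z a] by linarith
    then show "- (z^4 * (RR a z / (1 - a*z)^3)) - (exp z - (1 + z + z^2/2 + z^3/6))
     = rat_fun (psi_num a) (den a 3) z - exp z"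
    proof -
      have gen: "\<And>w R y3 e T::real. y3 \<noteq> 0 \<Longrightarrow> -(w*(R/y3)) - (e - T) = (T*y3 - w*R)/y3 - e"
        by (simp add: field_simps)
      have "(1 - a*z)^3 \<noteq> 0" using z by simp
      from gen[OF this, of "z^4" "RR a z" "exp z" "1 + z + z^2/2 + z^3/6"]
      show ?thesis using z \<open>poly (psi_num a) z = _\<close> by simp
    qed
  qed
  ultimately have "(\<lambda>z. rat_fun (psi_num a) (den a 3) z - exp z) \<in> O[at 0](\<lambda>z. z ^ 4)"
    using landau_o.big.in_cong[OF ev3, of "\<lambda>z. z^4"] by blast
  then have "(\<lambda>z. rat_fun (psi_num a) (den a 3) z - exp z) \<in> O[at 0](\<lambda>z. z ^ (3+1))"
    by (simp only: numeral_plus_one semiring_norm)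
  then show ?thesis unfolding Pihat_def using degree_psi[of a] by blast
qed


theorem mainTheorem18:
  shows "(\<forall>P a. (P, a) \<in> Pihat 3 3 \<longrightarrow> P = psi_num a)
    \<and> Rhat 3 3 = ereal (2 + sqrt 8)
    \<and> radius_am (psi_num ((2 - sqrt 2) / 4)) (den ((2 - sqrt 2) / 4) 3) = ereal (2 + sqrt 8)
    \<and> (\<forall>a::real. a \<noteq> (2 - sqrt 2) / 4 \<longrightarrow> radius_am (psi_num a) (den a 3) < ereal (2 + sqrt 8))"
proof (intro conjI allI impI)
  fix P a assume "(P, a) \<in> Pihat 3 3"
  then show "P = psi_num a" by (rule pihat_char)
next
  show "radius_am (psi_num ((2 - sqrt 2) / 4)) (den ((2 - sqrt 2) / 4) 3) = ereal (2 + sqrt 8)"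
    by (rule rad_star)
next
  fix a :: real assume "a \<noteq> (2 - sqrt 2) / 4"
  then show "radius_am (psi_num a) (den a 3) < ereal (2 + sqrt 8)" by (rule rad_lt)
next
  show "Rhat 3 3 = ereal (2 + sqrt 8)"
  proof (rule antisym)
    show "Rhat 3 3 \<le> ereal (2 + sqrt 8)"
      unfolding Rhat_def
    proof (rule Sup_least)
      fix y assume "y \<in> (\<lambda>(P, a). radius_am P (den a 3)) ` Pihat 3 3"
      then obtain P a where Pa: "(P, a) \<in> Pihat 3 3" and y: "y = radius_am P (den a 3)" by auto
      have P: "P = psi_num a" using Pa by (rule pihat_char)
      show "y \<le> ereal (2 + sqrt 8)"
      proof (cases "a = (2 - sqrt 2) / 4")
        case True then show ?thesis using y P rad_star by (metis order_refl)
      next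
        case False then show ?thesis using y P rad_lt[OF False] by simp
      qed
    qed
  next
    have "radius_am (psi_num ((2 - sqrt 2) / 4)) (den ((2 - sqrt 2) / 4) 3)
        \<in> (\<lambda>(P, a). radius_am P (den a 3)) ` Pihat 3 3"
      using psi_in[of "(2 - sqrt 2) / 4"] by force
    then have "radius_am (psi_num ((2 - sqrt 2) / 4)) (den ((2 - sqrt 2) / 4) 3) \<le> Rhat 3 3"
      unfolding Rhat_def by (rule Sup_upper)
    then show "ereal (2 + sqrt 8) \<le> Rhat 3 3" using rad_star by simp
  qed
qed

end
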